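(* Let $a\ge0$ and $\mathfrak g=\mathfrak r'_{3,a}$ (basis $\{e_1,e_2,e_3\}$, nonzero brackets $[e_1,e_2]=ae_2-e_3$, $[e_1,e_3]=e_2+ae_3$), and let $\langle\cdot,\cdot\rangle_0$ be the inner product for which $\{e_1,e_2,e_3\}$ is orthonormal. An inner product $\langle\cdot,\cdot\rangle$ on $\mathfrak g$ is a solvsoliton if and only if $[\langle\cdot,\cdot\rangle]=[\langle\cdot,\cdot\rangle_0]$. Moreover, $\langle\cdot,\cdot\rangle_0$ is Einstein.
   Context: An inner product on a solvable Lie algebra $\mathfrak g$ is a solvsoliton if its Ricci operator satisfies $\mathrm{Ric}=cI+D$ for some $c\in\mathbb R$ and $D\in\mathrm{Der}(\mathfrak g)$ (Ricci operator of the metric Lie algebra defined via $2\langle\nabla_XY,Z\rangle=\langle[Z,X],Y\rangle+\langle X,[Z,Y]\rangle+\langle[X,Y],Z\rangle$, $R(X,Y)=[\nabla_X,\nabla_Y]-\nabla_{[X,Y]}$, $\mathrm{Ric}(X)=\sum_iR(X,e_i)e_i$ for an orthonormal basis); it is Einstein if $\mathrm{Ric}=cI$. Two inner products are isometric up to scaling if $\langle\cdot,\cdot\rangle_1=k\langle f\cdot,f\cdot\rangle_2$ for some $k>0$ and Lie algebra automorphism $f$ of $\mathfrak g$; $[\langle\cdot,\cdot\rangle]$ denotes the equivalence class. *)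

theory Defs
  imports "HOL-Analysis.Analysis"
begin

type_synonym vec3 = "real ^ 3"

definition e1 :: vec3 where "e1 = axis 1 1"
definition e2 :: vec3 where "e2 = axis 2 1"
definition e3 :: vec3 where "e3 = axis 3 1"

text \<open>Lie bracket of r'_{3,a}: [e1,e2] = a e2 - e3, [e1,e3] = e2 + a e3, [e2,e3] = 0,
  extended bilinearly and skew-symmetrically.\<close>
definition brk :: "real \<Rightarrow> vec3 \<Rightarrow> vec3 \<Rightarrow> vec3" where
  "brk a x y =
     (x$1 * y$2 - x$2 * y$1) *\<^sub>R (a *\<^sub>R e2 - e3)
   + (x$1 * y$3 - x$3 * y$1) *\<^sub>R (e2 + a *\<^sub>R e3)"

definition is_inner_product :: "(vec3 \<Rightarrow> vec3 \<Rightarrow> real) \<Rightarrow> bool" where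
  "is_inner_product ip \<longleftrightarrow>
     (\<forall>y. linear (\<lambda>x. ip x y)) \<and> (\<forall>x y. ip x y = ip y x) \<and> (\<forall>x. x \<noteq> 0 \<longrightarrow> ip x x > 0)"

definition ip0 :: "vec3 \<Rightarrow> vec3 \<Rightarrow> real" where
  "ip0 x y = x \<bullet> y"

definition is_derivation :: "real \<Rightarrow> (vec3 \<Rightarrow> vec3) \<Rightarrow> bool" where
  "is_derivation a D \<longleftrightarrow> linear D \<and>
     (\<forall>x y. D (brk a x y) = brk a (D x) y + brk a x (D y))"

definition is_automorphism :: "real \<Rightarrow> (vec3 \<Rightarrow> vec3) \<Rightarrow> bool" where
  "is_automorphism a f \<longleftrightarrow> linear f \<and> bij f \<and>
     (\<forall>x y. f (brk a x y) = brk a (f x) (f y))"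

text \<open>Levi-Civita connection via the Koszul formula
  2<nabla_X Y, Z> = <[Z,X],Y> + <X,[Z,Y]> + <[X,Y],Z>.\<close>
definition nabla :: "real \<Rightarrow> (vec3 \<Rightarrow> vec3 \<Rightarrow> real) \<Rightarrow> vec3 \<Rightarrow> vec3 \<Rightarrow> vec3" where
  "nabla a ip X Y = (THE W. \<forall>Z. 2 * ip W Z =
       ip (brk a Z X) Y + ip X (brk a Z Y) + ip (brk a X Y) Z)"

definition curv :: "real \<Rightarrow> (vec3 \<Rightarrow> vec3 \<Rightarrow> real) \<Rightarrow> vec3 \<Rightarrow> vec3 \<Rightarrow> vec3 \<Rightarrow> vec3" where
  "curv a ip X Y W =
     nabla a ip X (nabla a ip Y W) - nabla a ip Y (nabla a ip X W) - nabla a ip (brk a X Y) W"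

definition orthonormal_basis :: "(vec3 \<Rightarrow> vec3 \<Rightarrow> real) \<Rightarrow> (3 \<Rightarrow> vec3) \<Rightarrow> bool" where
  "orthonormal_basis ip u \<longleftrightarrow> (\<forall>i j. ip (u i) (u j) = (if i = j then 1 else 0))"

definition ricci :: "real \<Rightarrow> (vec3 \<Rightarrow> vec3 \<Rightarrow> real) \<Rightarrow> vec3 \<Rightarrow> vec3" where
  "ricci a ip X = (let u = (SOME u. orthonormal_basis ip u) in
     (\<Sum>i\<in>UNIV. curv a ip X (u i) (u i)))"

definition is_solvsoliton :: "real \<Rightarrow> (vec3 \<Rightarrow> vec3 \<Rightarrow> real) \<Rightarrow> bool" where
  "is_solvsoliton a ip \<longleftrightarrow>
     (\<exists>c D. is_derivation a D \<and> (\<forall>X. ricci a ip X = c *\<^sub>R X + D X))"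

definition is_einstein :: "real \<Rightarrow> (vec3 \<Rightarrow> vec3 \<Rightarrow> real) \<Rightarrow> bool" where
  "is_einstein a ip \<longleftrightarrow> (\<exists>c. \<forall>X. ricci a ip X = c *\<^sub>R X)"

definition iso_up_to_scaling :: "real \<Rightarrow> (vec3 \<Rightarrow> vec3 \<Rightarrow> real) \<Rightarrow> (vec3 \<Rightarrow> vec3 \<Rightarrow> real) \<Rightarrow> bool" where
  "iso_up_to_scaling a ip1 ip2 \<longleftrightarrow>
     (\<exists>k f. k > 0 \<and> is_automorphism a f \<and> (\<forall>x y. ip1 x y = k * ip2 (f x) (f y)))"

end

theory Submission
  imports Defs
begin

definition nablaG :: "(vec3 \<Rightarrow> vec3 \<Rightarrow> vec3) \<Rightarrow> (vec3 \<Rightarrow> vec3 \<Rightarrow> real) \<Rightarrow> vec3 \<Rightarrow> vec3 \<Rightarrow> vec3" where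
  "nablaG br ip X Y = (THE W. \<forall>Z. 2 * ip W Z =
       ip (br Z X) Y + ip X (br Z Y) + ip (br X Y) Z)"

definition curvG :: "(vec3 \<Rightarrow> vec3 \<Rightarrow> vec3) \<Rightarrow> (vec3 \<Rightarrow> vec3 \<Rightarrow> real) \<Rightarrow> vec3 \<Rightarrow> vec3 \<Rightarrow> vec3 \<Rightarrow> vec3" where
  "curvG br ip X Y W =
     nablaG br ip X (nablaG br ip Y W) - nablaG br ip Y (nablaG br ip X W) - nablaG br ip (br X Y) W"

definition ricciG :: "(vec3 \<Rightarrow> vec3 \<Rightarrow> vec3) \<Rightarrow> (vec3 \<Rightarrow> vec3 \<Rightarrow> real) \<Rightarrow> vec3 \<Rightarrow> vec3" where
  "ricciG br ip X = (let u = (SOME u. orthonormal_basis ip u) in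
     (\<Sum>i\<in>UNIV. curvG br ip X (u i) (u i)))"

definition derivG :: "(vec3 \<Rightarrow> vec3 \<Rightarrow> vec3) \<Rightarrow> (vec3 \<Rightarrow> vec3) \<Rightarrow> bool" where
  "derivG br D \<longleftrightarrow> linear D \<and> (\<forall>x y. D (br x y) = br (D x) y + br x (D y))"

definition solitonG :: "(vec3 \<Rightarrow> vec3 \<Rightarrow> vec3) \<Rightarrow> (vec3 \<Rightarrow> vec3 \<Rightarrow> real) \<Rightarrow> bool" where
  "solitonG br ip \<longleftrightarrow> (\<exists>c D. derivG br D \<and> (\<forall>X. ricciG br ip X = c *\<^sub>R X + D X))"

lemma nabla_eq: "nabla a = nablaG (brk a)"
  by (intro ext) (simp add: nabla_def nablaG_def)
lemma curv_eq: "curv a = curvG (brk a)"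
  by (intro ext) (simp add: curv_def curvG_def nabla_eq)
lemma ricci_eq: "ricci a = ricciG (brk a)"
  by (intro ext) (simp add: ricci_def ricciG_def curv_eq)
lemma soliton_eq: "is_solvsoliton a ip = solitonG (brk a) ip"
  by (simp add: is_solvsoliton_def solitonG_def derivG_def is_derivation_def ricci_eq)

definition brkM :: "real \<Rightarrow> real \<Rightarrow> real \<Rightarrow> real \<Rightarrow> vec3 \<Rightarrow> vec3 \<Rightarrow> vec3" where
  "brkM b11 b12 b21 b22 x y = vector [0,
     (x$1*y$2 - x$2*y$1)*b11 + (x$1*y$3 - x$3*y$1)*b12,
     (x$1*y$2 - x$2*y$1)*b21 + (x$1*y$3 - x$3*y$1)*b22]"

lemma brk_eq: "brk a = brkM a 1 (-1) a"
  by (intro ext) (simp add: brk_def brkM_def e1_def e2_def e3_def vec_eq_iff forall_3 axis_def algebra_simps)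

definition NM :: "real \<Rightarrow> real \<Rightarrow> real \<Rightarrow> real \<Rightarrow> vec3 \<Rightarrow> vec3 \<Rightarrow> vec3" where
  "NM b11 b12 b21 b22 X Y = vector [
     b11*X$2*Y$2 + (b12+b21)/2*(X$2*Y$3 + X$3*Y$2) + b22*X$3*Y$3,
     -b11*X$2*Y$1 + (b12-b21)/2*X$1*Y$3 - (b12+b21)/2*X$3*Y$1,
     -(b12-b21)/2*X$1*Y$2 - (b12+b21)/2*X$2*Y$1 - b22*X$3*Y$1]"

lemma NM_prop: "2 * (NM b11 b12 b21 b22 X Y \<bullet> Z) =
   (brkM b11 b12 b21 b22 Z X) \<bullet> Y + X \<bullet> (brkM b11 b12 b21 b22 Z Y) + (brkM b11 b12 b21 b22 X Y) \<bullet> Z"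
  by (simp add: NM_def brkM_def inner_vec_def sum_3 field_simps)

lemma nablaM: "nablaG (brkM b11 b12 b21 b22) (\<bullet>) X Y = NM b11 b12 b21 b22 X Y"
  unfolding nablaG_def
proof (rule the_equality)
  show "\<forall>Z. 2 * (NM b11 b12 b21 b22 X Y \<bullet> Z) =
   (brkM b11 b12 b21 b22 Z X) \<bullet> Y + X \<bullet> (brkM b11 b12 b21 b22 Z Y) + (brkM b11 b12 b21 b22 X Y) \<bullet> Z"
    using NM_prop by blast
next
  fix W assume h: "\<forall>Z. 2 * (W \<bullet> Z) =
   (brkM b11 b12 b21 b22 Z X) \<bullet> Y + X \<bullet> (brkM b11 b12 b21 b22 Z Y) + (brkM b11 b12 b21 b22 X Y) \<bullet> Z"
  have "(W - NM b11 b12 b21 b22 X Y) \<bullet> (W - NM b11 b12 b21 b22 X Y) = 0"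
    using h[rule_format, of "W - NM b11 b12 b21 b22 X Y"] NM_prop[of b11 b12 b21 b22 X Y "W - NM b11 b12 b21 b22 X Y"]
    by (simp add: inner_diff_left)
  then show "W = NM b11 b12 b21 b22 X Y" by simp
qed

lemma NM_lin2: "linear (\<lambda>Y. NM b11 b12 b21 b22 X Y)"
  by (rule linearI) (simp_all add: NM_def vec_eq_iff forall_3 field_simps)
lemma NM_lin1: "linear (\<lambda>X. NM b11 b12 b21 b22 X Y)"
  by (rule linearI) (simp_all add: NM_def vec_eq_iff forall_3 field_simps)
lemma brkM_lin2: "linear (\<lambda>Y. brkM b11 b12 b21 b22 X Y)"
  by (rule linearI) (simp_all add: brkM_def vec_eq_iff forall_3 field_simps)

lemma curv_bil: "bilinear (\<lambda>Y W. curvG (brkM b11 b12 b21 b22) (\<bullet>) X Y W)"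
  unfolding bilinear_def curvG_def nablaM
proof (intro allI conjI)
  fix Y
  show "linear (\<lambda>W. NM b11 b12 b21 b22 X (NM b11 b12 b21 b22 Y W) -
              NM b11 b12 b21 b22 Y (NM b11 b12 b21 b22 X W) -
              NM b11 b12 b21 b22 (brkM b11 b12 b21 b22 X Y) W)"
    by (intro linear_compose_sub linear_compose[OF NM_lin2 NM_lin2, unfolded o_def] NM_lin2)
next
  fix W
  show "linear (\<lambda>Y. NM b11 b12 b21 b22 X (NM b11 b12 b21 b22 Y W) -
              NM b11 b12 b21 b22 Y (NM b11 b12 b21 b22 X W) -
              NM b11 b12 b21 b22 (brkM b11 b12 b21 b22 X Y) W)"
    by (intro linear_compose_sub linear_compose[OF NM_lin1 NM_lin2, unfolded o_def]
        linear_compose[OF brkM_lin2 NM_lin1, unfolded o_def] NM_lin1)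
qed

lemma bil_expand:
  fixes C :: "vec3 \<Rightarrow> vec3 \<Rightarrow> vec3"
  assumes "bilinear C"
  shows "C x y = (\<Sum>j\<in>UNIV. \<Sum>l\<in>UNIV. (x$j * y$l) *\<^sub>R C (axis j 1) (axis l 1))"
proof -
  have x: "x = (\<Sum>j\<in>UNIV. x$j *\<^sub>R axis j 1)" and y: "y = (\<Sum>l\<in>UNIV. y$l *\<^sub>R axis l 1)"
    using basis_expansion[of x] basis_expansion[of y] by (simp_all add: scalar_mult_eq_scaleR)
  have "C x y = C (\<Sum>j\<in>UNIV. x$j *\<^sub>R axis j 1) (\<Sum>l\<in>UNIV. y$l *\<^sub>R axis l 1)"
    by (rule arg_cong2[OF x y])
  also have "\<dots> = (\<Sum>(j,l)\<in>UNIV \<times> UNIV. C (x$j *\<^sub>R axis j 1) (y$l *\<^sub>R axis l 1))"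
    by (rule bilinear_sum[OF assms])
  also have "\<dots> = (\<Sum>j\<in>UNIV. \<Sum>l\<in>UNIV. C (x$j *\<^sub>R axis j 1) (y$l *\<^sub>R axis l 1))"
    by (simp add: sum.cartesian_product)
  also have "\<dots> = (\<Sum>j\<in>UNIV. \<Sum>l\<in>UNIV. (x$j * y$l) *\<^sub>R C (axis j 1) (axis l 1))"
    by (simp add: bilinear_lmul[OF assms] bilinear_rmul[OF assms] mult.commute)
  finally show ?thesis .
qed

lemma basis_indep:
  fixes C :: "vec3 \<Rightarrow> vec3 \<Rightarrow> vec3"
  assumes C: "bilinear C" and u: "orthonormal_basis (\<bullet>) u"
  shows "(\<Sum>i\<in>UNIV. C (u i) (u i)) = (\<Sum>j\<in>UNIV. C (axis j 1) (axis j 1))"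
proof -
  define U :: "real^3^3" where "U = (\<chi> i j. u i $ j)"
  have e: "(U ** transpose U) $ i $ k = u i \<bullet> u k" for i k
    by (simp add: U_def matrix_matrix_mult_def transpose_def inner_vec_def)
  have "U ** transpose U = mat 1"
    using u unfolding orthonormal_basis_def
    by (simp add: vec_eq_iff e mat_def)
  hence "transpose U ** U = mat 1" using matrix_left_right_inverse by blast
  hence m: "(transpose U ** U) $ j $ l = mat 1 $ j $ l" for j l by simp
  have e2: "(transpose U ** U) $ j $ l = (\<Sum>i\<in>UNIV. u i $ j * u i $ l)" for j l
    by (simp add: U_def matrix_matrix_mult_def transpose_def)
  have orth: "(\<Sum>i\<in>UNIV. u i $ j * u i $ l) = (if j = l then 1 else 0)" for j l
    using m[of j l] unfolding e2 by (simp add: mat_def)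
  have "(\<Sum>i\<in>UNIV. C (u i) (u i)) =
      (\<Sum>i\<in>UNIV. \<Sum>j\<in>UNIV. \<Sum>l\<in>UNIV. (u i $ j * u i $ l) *\<^sub>R C (axis j 1) (axis l 1))"
    by (subst bil_expand[OF C]) simp
  also have "\<dots> = (\<Sum>j\<in>UNIV. \<Sum>i\<in>UNIV. \<Sum>l\<in>UNIV. (u i $ j * u i $ l) *\<^sub>R C (axis j 1) (axis l 1))"
    by (rule sum.swap)
  also have "\<dots> = (\<Sum>j\<in>UNIV. \<Sum>l\<in>UNIV. \<Sum>i\<in>UNIV. (u i $ j * u i $ l) *\<^sub>R C (axis j 1) (axis l 1))"
    by (rule sum.cong[OF refl], rule sum.swap)
  also have "\<dots> = (\<Sum>j\<in>UNIV. \<Sum>l\<in>UNIV. (if j = l then 1 else 0) *\<^sub>R C (axis j 1) (axis l 1))"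
    by (simp only: scaleR_sum_left[symmetric] orth)
  also have "\<dots> = (\<Sum>j\<in>UNIV. C (axis j 1) (axis j 1))"
    by (simp add: sum_3)
  finally show ?thesis .
qed

lemma onb_axis: "orthonormal_basis (\<bullet>) (\<lambda>i. axis i 1)"
  by (simp add: orthonormal_basis_def inner_axis_axis)

lemma ricci_dot: "ricciG (brkM b11 b12 b21 b22) (\<bullet>) X =
   (\<Sum>j\<in>UNIV. curvG (brkM b11 b12 b21 b22) (\<bullet>) X (axis j 1) (axis j 1))"
proof -
  have "orthonormal_basis (\<bullet>) (SOME u. orthonormal_basis (\<bullet>) u)"
    by (metis onb_axis someI_ex)
  then show ?thesis unfolding ricciG_def Let_def
    by (rule basis_indep[OF curv_bil])
qed

lemma ricci_sum_onb:
  assumes "orthonormal_basis (\<bullet>) u"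
  shows "(\<Sum>i\<in>UNIV. curvG (brkM b11 b12 b21 b22) (\<bullet>) X (u i) (u i)) = ricciG (brkM b11 b12 b21 b22) (\<bullet>) X"
  unfolding ricci_dot by (rule basis_indep[OF curv_bil assms])

definition "Rq b11 b12 b21 b22 = -(b11^2 + b22^2 + (b12+b21)^2/2)"
definition "Rp b11 b12 b21 b22 = (- (b11^2) - b11*b22 + (b12^2 - b21^2)/2)"
definition "Rr b11 b12 b21 b22 = - (b11*b12 + b21*b22)"
definition "Rs b11 b12 b21 b22 = (- (b11*b22) - b22^2 + (b21^2 - b12^2)/2)"

definition RicM :: "real \<Rightarrow> real \<Rightarrow> real \<Rightarrow> real \<Rightarrow> vec3 \<Rightarrow> vec3" where
  "RicM b11 b12 b21 b22 X = vector [
     Rq b11 b12 b21 b22 * X$1,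
     Rp b11 b12 b21 b22 * X$2 + Rr b11 b12 b21 b22 * X$3,
     Rr b11 b12 b21 b22 * X$2 + Rs b11 b12 b21 b22 * X$3]"

lemma NMe11: "NM b11 b12 b21 b22 (axis 1 1) (axis 1 1) = 0"
  by (simp add: NM_def axis_def vec_eq_iff forall_3)
lemma NMe22: "NM b11 b12 b21 b22 (axis 2 1) (axis 2 1) = vector [b11, 0, 0]"
  by (simp add: NM_def axis_def vec_eq_iff forall_3)
lemma NMe33: "NM b11 b12 b21 b22 (axis 3 1) (axis 3 1) = vector [b22, 0, 0]"
  by (simp add: NM_def axis_def vec_eq_iff forall_3)

lemma ricciM: "ricciG (brkM b11 b12 b21 b22) (\<bullet>) X = RicM b11 b12 b21 b22 X"
  unfolding ricci_dot curvG_def nablaM sum_3 NMe11 NMe22 NMe33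
  apply (simp add: RicM_def Rq_def Rp_def Rr_def Rs_def NM_def brkM_def axis_def vec_eq_iff forall_3)
  apply (simp add: field_simps power2_eq_square)
  done

lemma ricci_normal: "ricciG (brkM b k (-k) b) (\<bullet>) X = (-2*b^2) *\<^sub>R X"
  by (simp add: ricciM RicM_def Rq_def Rp_def Rr_def Rs_def vec_eq_iff forall_3 algebra_simps power2_eq_square)

lemma soliton_normal: "solitonG (brkM b k (-k) b) (\<bullet>)"
  unfolding solitonG_def derivG_def
  by (rule exI[of _ "-2*b^2"], rule exI[of _ "\<lambda>x. 0"]) (simp add: ricci_normal linear_zero brkM_def vec_eq_iff forall_3)

lemma alg1:
  fixes b11 b12 b21 b22 p r s l :: real
  assumes E11: "r*(b21-b12) = l*b11" and E22: "r*(b12-b21) = l*b22"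
    and E12: "(p-s)*b12 + r*(b22-b11) = l*b12" and E21: "(s-p)*b21 + r*(b11-b22) = l*b21"
    and disc: "(b11-b22)^2 + 4*b12*b21 < 0"
  shows "r = 0 \<and> p = s"
proof -
  have "l*((b11-b22)^2 + 4*b12*b21) = (b11-b22)*(l*b11) - (b11-b22)*(l*b22) + 2*b21*(l*b12) + 2*b12*(l*b21)"
    by (simp add: algebra_simps power2_eq_square)
  also have "\<dots> = (b11-b22)*(r*(b21-b12)) - (b11-b22)*(r*(b12-b21)) + 2*b21*((p-s)*b12 + r*(b22-b11))
     + 2*b12*((s-p)*b21 + r*(b11-b22))"
    using E11 E12 E21 E22 by simp
  also have "\<dots> = 0" by (simp add: algebra_simps)
  finally have "l = 0" using disc by simp
  have w: "b12 - b21 \<noteq> 0"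
  proof
    assume "b12 - b21 = 0"
    hence "b21 = b12" by simp
    hence "(b11-b22)^2 + 4*b12*b21 = (b11-b22)^2 + 4*b12^2" by (simp add: power2_eq_square)
    moreover have "(b11-b22)^2 + 4*b12^2 \<ge> 0" by simp
    ultimately show False using disc by linarith
  qed
  have "r = 0" using E22 \<open>l = 0\<close> w by simp
  have h1: "(p-s)*b12 = 0" using E12 \<open>l=0\<close> \<open>r=0\<close> by simp
  have h2: "(s-p)*b21 = 0" using E21 \<open>l=0\<close> \<open>r=0\<close> by simp
  have "(p-s)*(b12-b21) = (p-s)*b12 + (s-p)*b21" by (simp add: algebra_simps)
  hence "(p-s)*(b12-b21) = 0" using h1 h2 by simp
  hence "p = s" using w by simp
  with \<open>r = 0\<close> show ?thesis by simp
qed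

lemma alg2:
  fixes b11 b12 b21 b22 :: real
  assumes r: "b11 * b12 + b21 * b22 = 0" and ps: "b11^2 - b22^2 = b12^2 - b21^2"
    and disc: "(b11-b22)^2 + 4 * b12 * b21 < 0"
  shows "b11 = b22 \<and> b12 = -b21"
proof -
  define uu where "uu = b11 - b22"
  define vv where "vv = b12 + b21"
  define tt where "tt = b11 + b22"
  define ww where "ww = b12 - b21"
  have e1: "tt * vv + uu * ww = 0" using r by (simp add: tt_def uu_def vv_def ww_def algebra_simps)
  have e1': "uu * ww = -(tt * vv)" and e1'': "tt * vv = -(uu * ww)" using e1 by linarith+
  have e2: "uu * tt = ww * vv" using ps by (simp add: tt_def uu_def vv_def ww_def algebra_simps power2_eq_square)
  have "uu^2 + vv^2 - ww^2 < 0" using disc by (simp add: uu_def vv_def ww_def algebra_simps power2_eq_square)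
  moreover have "0 \<le> uu^2 + vv^2" by simp
  ultimately have "0 < ww^2" by linarith
  hence wz: "ww \<noteq> 0" by auto
  have pos: "tt^2 + ww^2 > 0" using wz by (metis add_nonneg_pos zero_le_power2 zero_less_power2)
  have "uu * (tt^2 + ww^2) = tt * (uu * tt) + ww * (uu * ww)" by (simp add: algebra_simps power2_eq_square)
  also have "\<dots> = tt * (ww * vv) + ww * (-(tt * vv))" by (simp only: e2 e1')
  also have "\<dots> = 0" by (simp add: algebra_simps)
  finally have "uu = 0" using wz by simp
  have "vv * (tt^2 + ww^2) = tt * (tt * vv) + ww * (ww * vv)" by (simp add: algebra_simps power2_eq_square)
  also have "\<dots> = tt * (-(uu * ww)) + ww * (uu * tt)" by (simp only: e1'' e2)
  also have "\<dots> = 0" by (simp add: algebra_simps)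
  finally have "vv = 0" using wz by simp
  show ?thesis using \<open>uu = 0\<close> \<open>vv = 0\<close> by (simp add: uu_def vv_def)
qed

lemma soliton_forced:
  assumes sol: "solitonG (brkM b11 b12 b21 b22) (\<bullet>)"
    and disc: "(b11-b22)^2 + 4*b12*b21 < 0"
  shows "b11 = b22 \<and> b12 = -b21"
proof -
  obtain c D where der: "derivG (brkM b11 b12 b21 b22) D"
    and ric: "\<forall>X. ricciG (brkM b11 b12 b21 b22) (\<bullet>) X = c *\<^sub>R X + D X"
    using sol unfolding solitonG_def by blast
  have Dx: "D z = RicM b11 b12 b21 b22 z - c *\<^sub>R z" for z
    using ric[rule_format, of z] by (simp add: ricciM)
  have hom: "D (brkM b11 b12 b21 b22 x y) = brkM b11 b12 b21 b22 (D x) y + brkM b11 b12 b21 b22 x (D y)" for x y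
    using der unfolding derivG_def by blast
  define q where "q = Rq b11 b12 b21 b22"
  define p where "p = Rp b11 b12 b21 b22"
  define r where "r = Rr b11 b12 b21 b22"
  define s where "s = Rs b11 b12 b21 b22"
  have Dx': "D z = vector [q * z$1 - c * z$1, p * z$2 + r * z$3 - c * z$2, r * z$2 + s * z$3 - c * z$3]" for z
    unfolding Dx RicM_def q_def p_def r_def s_def by (simp add: vec_eq_iff forall_3)
  note d12 = hom[of "axis 1 1" "axis 2 1"] and d13 = hom[of "axis 1 1" "axis 3 1"]
  have E11: "r*(b21-b12) = (q-c)*b11"
    using arg_cong[OF d12, of "\<lambda>v. v$2"] by (simp add: Dx' brkM_def axis_def algebra_simps)
  have E21: "(s-p)*b21 + r*(b11-b22) = (q-c)*b21"
    using arg_cong[OF d12, of "\<lambda>v. v$3"] by (simp add: Dx' brkM_def axis_def algebra_simps)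
  have E12: "(p-s)*b12 + r*(b22-b11) = (q-c)*b12"
    using arg_cong[OF d13, of "\<lambda>v. v$2"] by (simp add: Dx' brkM_def axis_def algebra_simps)
  have E22: "r*(b12-b21) = (q-c)*b22"
    using arg_cong[OF d13, of "\<lambda>v. v$3"] by (simp add: Dx' brkM_def axis_def algebra_simps)
  have "r = 0 \<and> p = s" by (rule alg1[OF E11 E22 E12 E21 disc])
  hence "b11*b12 + b21*b22 = 0" "b11^2 - b22^2 = b12^2 - b21^2"
    by (auto simp: r_def p_def s_def Rr_def Rp_def Rs_def field_simps)
  then show ?thesis using alg2 disc by blast
qed

lemma nabla_char:
  assumes ip: "is_inner_product ip"
    and W: "\<forall>Z. 2 * ip W Z = ip (br Z X) Y + ip X (br Z Y) + ip (br X Y) Z"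
  shows "nablaG br ip X Y = W"
  unfolding nablaG_def
proof (rule the_equality)
  show "\<forall>Z. 2 * ip W Z = ip (br Z X) Y + ip X (br Z Y) + ip (br X Y) Z" by (rule W)
next
  fix W' assume W': "\<forall>Z. 2 * ip W' Z = ip (br Z X) Y + ip X (br Z Y) + ip (br X Y) Z"
  have lin: "linear (\<lambda>x. ip x (W' - W))" using ip unfolding is_inner_product_def by blast
  have "ip (W' - W) (W' - W) = ip W' (W' - W) - ip W (W' - W)"
    using linear_diff[OF lin] by simp
  also have "\<dots> = 0" using W[rule_format, of "W' - W"] W'[rule_format, of "W' - W"] by simp
  finally have "ip (W' - W) (W' - W) = 0" .
  then show "W' = W" using ip unfolding is_inner_product_def
    by (metis less_irrefl right_minus_eq)
qed

locale transp =
  fixes br1 :: "vec3 \<Rightarrow> vec3 \<Rightarrow> vec3" and ip1 P Q and b11 b12 b21 b22 :: real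
  assumes ip1: "is_inner_product ip1"
    and linP: "linear P" and linQ: "linear Q"
    and QP: "\<And>x. Q (P x) = x" and PQ: "\<And>y. P (Q y) = y"
    and hom: "\<And>x y. P (br1 x y) = brkM b11 b12 b21 b22 (P x) (P y)"
    and iso: "\<And>x y. ip1 x y = P x \<bullet> P y"
begin

abbreviation "br2 \<equiv> brkM b11 b12 b21 b22"

lemma nabla_tr: "nablaG br1 ip1 X Y = Q (NM b11 b12 b21 b22 (P X) (P Y))"
proof (rule nabla_char[OF ip1], intro allI)
  fix Z
  show "2 * ip1 (Q (NM b11 b12 b21 b22 (P X) (P Y))) Z =
         ip1 (br1 Z X) Y + ip1 X (br1 Z Y) + ip1 (br1 X Y) Z"
    unfolding iso PQ hom by (rule NM_prop)
qed

lemma curv_tr: "curvG br1 ip1 X Y W = Q (curvG br2 (\<bullet>) (P X) (P Y) (P W))"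
  unfolding curvG_def nabla_tr nablaM PQ hom
  by (simp add: linear_diff[OF linQ])

lemma ricci_tr: "ricciG br1 ip1 X = Q (ricciG br2 (\<bullet>) (P X))"
proof -
  define u where "u = (SOME u. orthonormal_basis ip1 u)"
  have "orthonormal_basis ip1 (\<lambda>i. Q (axis i 1))"
    unfolding orthonormal_basis_def iso PQ by (simp add: inner_axis_axis)
  hence u: "orthonormal_basis ip1 u" unfolding u_def by (metis someI_ex)
  hence v: "orthonormal_basis (\<bullet>) (\<lambda>i. P (u i))"
    unfolding orthonormal_basis_def iso by simp
  have "ricciG br1 ip1 X = (\<Sum>i\<in>UNIV. curvG br1 ip1 X (u i) (u i))"
    unfolding ricciG_def u_def by (simp add: Let_def)
  also have "\<dots> = (\<Sum>i\<in>UNIV. Q (curvG br2 (\<bullet>) (P X) (P (u i)) (P (u i))))"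
    unfolding curv_tr ..
  also have "\<dots> = Q (\<Sum>i\<in>UNIV. curvG br2 (\<bullet>) (P X) (P (u i)) (P (u i)))"
    by (simp add: linear_sum[OF linQ] o_def)
  also have "\<dots> = Q (ricciG br2 (\<bullet>) (P X))"
    unfolding ricci_sum_onb[OF v] ..
  finally show ?thesis .
qed

lemma soliton_tr: "solitonG br1 ip1 \<longleftrightarrow> solitonG br2 (\<bullet>)"
proof
  assume "solitonG br1 ip1"
  then obtain c D where der: "derivG br1 D" and ric: "\<forall>X. ricciG br1 ip1 X = c *\<^sub>R X + D X"
    unfolding solitonG_def by blast
  have linD: "linear D" and homD: "\<And>x y. D (br1 x y) = br1 (D x) y + br1 x (D y)"
    using der unfolding derivG_def by blast+
  define D2 where "D2 = (\<lambda>y. P (D (Q y)))"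
  have "derivG br2 D2"
    unfolding derivG_def
  proof (intro conjI allI)
    show "linear D2" unfolding D2_def
      using linear_compose[OF linear_compose[OF linQ linD] linP] by (simp add: o_def)
  next
    fix x y
    have "br2 x y = P (br1 (Q x) (Q y))" using hom[of "Q x" "Q y"] by (simp add: PQ)
    hence "D2 (br2 x y) = P (br1 (D (Q x)) (Q y) + br1 (Q x) (D (Q y)))"
      unfolding D2_def by (simp add: QP homD)
    also have "\<dots> = br2 (D2 x) y + br2 x (D2 y)"
      by (simp add: linear_add[OF linP] hom D2_def PQ)
    finally show "D2 (br2 x y) = br2 (D2 x) y + br2 x (D2 y)" .
  qed
  moreover have "ricciG br2 (\<bullet>) Y = c *\<^sub>R Y + D2 Y" for Y
  proof -
    have "ricciG br2 (\<bullet>) Y = P (ricciG br1 ip1 (Q Y))" by (simp add: ricci_tr PQ)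
    also have "\<dots> = c *\<^sub>R Y + D2 Y"
      using ric by (simp add: linear_add[OF linP] linear_scale[OF linP] PQ D2_def)
    finally show ?thesis .
  qed
  ultimately show "solitonG br2 (\<bullet>)" unfolding solitonG_def by blast
next
  assume "solitonG br2 (\<bullet>)"
  then obtain c D where der: "derivG br2 D" and ric: "\<forall>X. ricciG br2 (\<bullet>) X = c *\<^sub>R X + D X"
    unfolding solitonG_def by blast
  have linD: "linear D" and homD: "\<And>x y. D (br2 x y) = br2 (D x) y + br2 x (D y)"
    using der unfolding derivG_def by blast+
  define D1 where "D1 = (\<lambda>y. Q (D (P y)))"
  have "derivG br1 D1"
    unfolding derivG_def
  proof (intro conjI allI)
    show "linear D1" unfolding D1_def
      using linear_compose[OF linear_compose[OF linP linD] linQ] by (simp add: o_def)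
  next
    fix x y
    have "D1 (br1 x y) = Q (br2 (D (P x)) (P y) + br2 (P x) (D (P y)))"
      unfolding D1_def by (simp add: hom homD)
    also have "\<dots> = Q (P (br1 (D1 x) y)) + Q (P (br1 x (D1 y)))"
      by (simp add: linear_add[OF linQ] hom D1_def PQ)
    finally show "D1 (br1 x y) = br1 (D1 x) y + br1 x (D1 y)" by (simp add: QP)
  qed
  moreover have "ricciG br1 ip1 X = c *\<^sub>R X + D1 X" for X
    using ric by (simp add: ricci_tr linear_add[OF linQ] linear_scale[OF linQ] QP D1_def)
  ultimately show "solitonG br1 ip1" unfolding solitonG_def by blast
qed

end

lemma ip_expand:
  assumes ip: "is_inner_product ip"
  shows "ip x y = (\<Sum>i\<in>UNIV. \<Sum>j\<in>UNIV. (x$i * y$j) * ip (axis i 1) (axis j 1))"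
proof -
  have l1: "linear (\<lambda>x. ip x z)" for z using ip unfolding is_inner_product_def by blast
  have sym: "ip u v = ip v u" for u v using ip unfolding is_inner_product_def by blast
  have l2: "linear (\<lambda>y. ip z y)" for z using l1[of z] by (simp add: sym)
  have x: "x = (\<Sum>i\<in>UNIV. x$i *\<^sub>R axis i 1)" and y: "y = (\<Sum>j\<in>UNIV. y$j *\<^sub>R axis j 1)"
    using basis_expansion[of x] basis_expansion[of y] by (simp_all add: scalar_mult_eq_scaleR)
  have "ip x y = ip (\<Sum>i\<in>UNIV. x$i *\<^sub>R axis i 1) (\<Sum>j\<in>UNIV. y$j *\<^sub>R axis j 1)"
    by (rule arg_cong2[OF x y])
  also have "\<dots> = (\<Sum>i\<in>UNIV. x$i * ip (axis i 1) (\<Sum>j\<in>UNIV. y$j *\<^sub>R axis j 1))"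
    by (simp add: linear_sum[OF l1] linear_scale[OF l1] o_def)
  also have "\<dots> = (\<Sum>i\<in>UNIV. x$i * (\<Sum>j\<in>UNIV. y$j * ip (axis i 1) (axis j 1)))"
    by (simp add: linear_sum[OF l2] linear_scale[OF l2] o_def)
  also have "\<dots> = (\<Sum>i\<in>UNIV. \<Sum>j\<in>UNIV. (x$i * y$j) * ip (axis i 1) (axis j 1))"
    by (simp add: sum_distrib_left mult.assoc)
  finally show ?thesis .
qed

definition Qf :: "real \<Rightarrow> real \<Rightarrow> real \<Rightarrow> real \<Rightarrow> real \<Rightarrow> real \<Rightarrow> vec3 \<Rightarrow> vec3" where
  "Qf \<alpha> \<beta> \<gamma> c d f p = vector [\<alpha>*p$1, \<beta>*p$1 + c*p$2 + d*p$3, \<gamma>*p$1 + f*p$3]"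

lemma cholesky:
  assumes ip: "is_inner_product ip"
  shows "\<exists>\<alpha> \<beta> \<gamma> c d f. \<alpha> \<noteq> 0 \<and> c \<noteq> 0 \<and> f \<noteq> 0 \<and>
           (\<forall>p q. ip (Qf \<alpha> \<beta> \<gamma> c d f p) (Qf \<alpha> \<beta> \<gamma> c d f q) = p \<bullet> q)"
proof -
  have sym: "ip u v = ip v u" for u v using ip unfolding is_inner_product_def by blast
  have pos: "x \<noteq> 0 \<Longrightarrow> ip x x > 0" for x using ip unfolding is_inner_product_def by blast
  define g11 where "g11 = ip (axis 1 1) (axis 1 1)"
  define g12 where "g12 = ip (axis 1 1) (axis 2 1)"
  define g13 where "g13 = ip (axis 1 1) (axis 3 1)"
  define g22 where "g22 = ip (axis 2 1) (axis 2 1)"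
  define g23 where "g23 = ip (axis 2 1) (axis 3 1)"
  define g33 where "g33 = ip (axis 3 1) (axis 3 1)"
  have ipx: "ip x y = x$1*y$1*g11 + x$1*y$2*g12 + x$1*y$3*g13 + x$2*y$1*g12 + x$2*y$2*g22
      + x$2*y$3*g23 + x$3*y$1*g13 + x$3*y$2*g23 + x$3*y$3*g33" for x y
    unfolding ip_expand[OF ip, of x y] sum_3 g11_def g12_def g13_def g22_def g23_def g33_def
    by (simp add: sym[of "axis 2 1" "axis 1 1"] sym[of "axis 3 1" "axis 1 1"] sym[of "axis 3 1" "axis 2 1"])
  have gen: "ip (Qf \<alpha> \<beta> \<gamma> c d f p) (Qf \<alpha> \<beta> \<gamma> c d f q) =
      p$1*q$1*(\<alpha>*\<alpha>*g11 + 2*\<alpha>*\<beta>*g12 + 2*\<alpha>*\<gamma>*g13 + \<beta>*\<beta>*g22 + 2*\<beta>*\<gamma>*g23 + \<gamma>*\<gamma>*g33)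
    + (p$1*q$2 + p$2*q$1)*(c*(\<alpha>*g12 + \<beta>*g22 + \<gamma>*g23))
    + (p$1*q$3 + p$3*q$1)*(d*(\<alpha>*g12 + \<beta>*g22 + \<gamma>*g23) + f*(\<alpha>*g13 + \<beta>*g23 + \<gamma>*g33))
    + p$2*q$2*(c*c*g22) + (p$2*q$3 + p$3*q$2)*(c*(d*g22 + f*g23))
    + p$3*q$3*(d*d*g22 + 2*d*f*g23 + f*f*g33)" for \<alpha> \<beta> \<gamma> c d f p q
    unfolding ipx by (simp add: Qf_def algebra_simps)
  have g22: "g22 > 0" using pos[of "axis 2 1"] by (simp add: g22_def axis_eq_0_iff)
  define h where "h = g33 - g23*g23/g22"
  have h: "h > 0"
  proof -
    have "ip (vector [0, -g23/g22, 1]) (vector [0, -g23/g22, 1]) > 0"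
      by (rule pos) (simp add: vec_eq_iff forall_3)
    then show ?thesis unfolding ipx h_def using g22 by (simp add: field_simps)
  qed
  define \<Delta> where "\<Delta> = g22*g33 - g23*g23"
  have \<Delta>: "\<Delta> > 0" using h g22 unfolding \<Delta>_def h_def by (simp add: field_simps)
  define \<beta>0 where "\<beta>0 = (g13*g23 - g12*g33)/\<Delta>"
  define \<gamma>0 where "\<gamma>0 = (g12*g23 - g13*g22)/\<Delta>"
  have o2: "g12 + \<beta>0*g22 + \<gamma>0*g23 = 0"
    using \<Delta> unfolding \<beta>0_def \<gamma>0_def \<Delta>_def by (simp add: field_simps)
  have o3: "g13 + \<beta>0*g23 + \<gamma>0*g33 = 0"
    using \<Delta> unfolding \<beta>0_def \<gamma>0_def \<Delta>_def by (simp add: field_simps)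
  define S where "S = g11 + 2*\<beta>0*g12 + 2*\<gamma>0*g13 + \<beta>0*\<beta>0*g22 + 2*\<beta>0*\<gamma>0*g23 + \<gamma>0*\<gamma>0*g33"
  have S: "S > 0"
  proof -
    have "ip (vector [1, \<beta>0, \<gamma>0]) (vector [1, \<beta>0, \<gamma>0]) > 0"
      by (rule pos) (simp add: vec_eq_iff forall_3)
    then show ?thesis unfolding ipx S_def by (simp add: algebra_simps)
  qed
  define \<alpha> where "\<alpha> = 1 / sqrt S"
  define c where "c = 1 / sqrt g22"
  define f where "f = 1 / sqrt h"
  define d where "d = - f * g23 / g22"
  have \<alpha>\<alpha>: "\<alpha>*\<alpha> = 1/S" using S unfolding \<alpha>_def by (simp add: field_simps)
  have cc: "c*c = 1/g22" using g22 unfolding c_def by (simp add: field_simps)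
  have ff: "f*f = 1/h" using h unfolding f_def by (simp add: field_simps)
  have nz: "\<alpha> \<noteq> 0" "c \<noteq> 0" "f \<noteq> 0" using S g22 h by (simp_all add: \<alpha>_def c_def f_def)
  have W11: "\<alpha>*\<alpha>*g11 + 2*\<alpha>*(\<alpha>*\<beta>0)*g12 + 2*\<alpha>*(\<alpha>*\<gamma>0)*g13 + (\<alpha>*\<beta>0)*(\<alpha>*\<beta>0)*g22
      + 2*(\<alpha>*\<beta>0)*(\<alpha>*\<gamma>0)*g23 + (\<alpha>*\<gamma>0)*(\<alpha>*\<gamma>0)*g33 = 1"
  proof -
    have "\<alpha>*\<alpha>*g11 + 2*\<alpha>*(\<alpha>*\<beta>0)*g12 + 2*\<alpha>*(\<alpha>*\<gamma>0)*g13 + (\<alpha>*\<beta>0)*(\<alpha>*\<beta>0)*g22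
      + 2*(\<alpha>*\<beta>0)*(\<alpha>*\<gamma>0)*g23 + (\<alpha>*\<gamma>0)*(\<alpha>*\<gamma>0)*g33 = (\<alpha>*\<alpha>) * S"
      unfolding S_def by (simp add: algebra_simps)
    also have "\<dots> = 1" using S by (simp add: \<alpha>\<alpha>)
    finally show ?thesis .
  qed
  have W12: "c*(\<alpha>*g12 + (\<alpha>*\<beta>0)*g22 + (\<alpha>*\<gamma>0)*g23) = 0"
  proof -
    have "c*(\<alpha>*g12 + (\<alpha>*\<beta>0)*g22 + (\<alpha>*\<gamma>0)*g23) = c*\<alpha>*(g12 + \<beta>0*g22 + \<gamma>0*g23)"
      by (simp add: algebra_simps)
    then show ?thesis using o2 by simp
  qed
  have W13: "d*(\<alpha>*g12 + (\<alpha>*\<beta>0)*g22 + (\<alpha>*\<gamma>0)*g23) + f*(\<alpha>*g13 + (\<alpha>*\<beta>0)*g23 + (\<alpha>*\<gamma>0)*g33) = 0"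
  proof -
    have "d*(\<alpha>*g12 + (\<alpha>*\<beta>0)*g22 + (\<alpha>*\<gamma>0)*g23) + f*(\<alpha>*g13 + (\<alpha>*\<beta>0)*g23 + (\<alpha>*\<gamma>0)*g33)
       = d*\<alpha>*(g12 + \<beta>0*g22 + \<gamma>0*g23) + f*\<alpha>*(g13 + \<beta>0*g23 + \<gamma>0*g33)"
      by (simp add: algebra_simps)
    then show ?thesis using o2 o3 by simp
  qed
  have W22: "c*c*g22 = 1" using cc g22 by simp
  have W23: "c*(d*g22 + f*g23) = 0" using g22 unfolding d_def by (simp add: field_simps)
  have W33: "d*d*g22 + 2*d*f*g23 + f*f*g33 = 1"
  proof -
    have "d*d*g22 + 2*d*f*g23 + f*f*g33 = (f*f)*h"
      using g22 unfolding d_def h_def by (simp add: field_simps)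
    also have "\<dots> = 1" using h by (simp add: ff)
    finally show ?thesis .
  qed
  have "\<forall>p q. ip (Qf \<alpha> (\<alpha>*\<beta>0) (\<alpha>*\<gamma>0) c d f p) (Qf \<alpha> (\<alpha>*\<beta>0) (\<alpha>*\<gamma>0) c d f q) = p \<bullet> q"
    unfolding gen W11 W12 W13 W22 W23 W33 by (simp add: inner_vec_def sum_3 algebra_simps)
  with nz show ?thesis by blast
qed

lemma Qbrk:
  assumes "c \<noteq> 0" "f \<noteq> 0"
  shows "brk a (Qf \<alpha> \<beta> \<gamma> c d f p) (Qf \<alpha> \<beta> \<gamma> c d f q) =
    Qf \<alpha> \<beta> \<gamma> c d f (brkM (\<alpha>*(a + d/f)) (\<alpha>*(f*f + d*d)/(c*f)) (-\<alpha>*c/f) (\<alpha>*(a - d/f)) p q)"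
  using assms unfolding brk_eq
  by (simp add: Qf_def brkM_def vec_eq_iff forall_3 field_simps)

definition Pf :: "real \<Rightarrow> real \<Rightarrow> real \<Rightarrow> real \<Rightarrow> real \<Rightarrow> real \<Rightarrow> vec3 \<Rightarrow> vec3" where
  "Pf \<alpha> \<beta> \<gamma> c d f x = vector [x$1/\<alpha>, (x$2 - \<beta>*(x$1/\<alpha>) - d*((x$3 - \<gamma>*(x$1/\<alpha>))/f))/c,
      (x$3 - \<gamma>*(x$1/\<alpha>))/f]"

lemma forward:
  assumes ip: "is_inner_product ip" and sol: "is_solvsoliton a ip"
  shows "iso_up_to_scaling a ip ip0"
proof -
  obtain \<alpha> \<beta> \<gamma> c d f where nz: "\<alpha> \<noteq> 0" "c \<noteq> 0" "f \<noteq> 0"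
    and orth: "\<forall>p q. ip (Qf \<alpha> \<beta> \<gamma> c d f p) (Qf \<alpha> \<beta> \<gamma> c d f q) = p \<bullet> q"
    using cholesky[OF ip] by blast
  define Q where "Q = Qf \<alpha> \<beta> \<gamma> c d f"
  define P where "P = Pf \<alpha> \<beta> \<gamma> c d f"
  define b11 where "b11 = \<alpha>*(a + d/f)"
  define b12 where "b12 = \<alpha>*(f*f + d*d)/(c*f)"
  define b21 where "b21 = -\<alpha>*c/f"
  define b22 where "b22 = \<alpha>*(a - d/f)"
  have QP: "Q (P x) = x" for x using nz
    by (simp add: Q_def P_def Qf_def Pf_def vec_eq_iff forall_3 field_simps)
  have PQ: "P (Q x) = x" for x using nz
    by (simp add: Q_def P_def Qf_def Pf_def vec_eq_iff forall_3 field_simps)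
  have linQ: "linear Q" unfolding Q_def
    by (rule linearI) (simp_all add: Qf_def vec_eq_iff forall_3 field_simps)
  have linP: "linear P" unfolding P_def using nz
    by (intro linearI) (simp_all add: Pf_def vec_eq_iff forall_3 field_simps)
  have Qb: "brk a (Q p) (Q q) = Q (brkM b11 b12 b21 b22 p q)" for p q
    unfolding Q_def b11_def b12_def b21_def b22_def using Qbrk[OF nz(2,3)] by simp
  have hom: "P (brk a x y) = brkM b11 b12 b21 b22 (P x) (P y)" for x y
    using Qb[of "P x" "P y"] by (metis QP PQ)
  have iso: "ip x y = P x \<bullet> P y" for x y
    using orth[rule_format, of "P x" "P y"] by (simp add: QP Q_def[symmetric])
  interpret transp "brk a" ip P Q b11 b12 b21 b22
    by (rule transp.intro[OF ip linP linQ]) (fact QP PQ hom iso)+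
  have "solitonG (brkM b11 b12 b21 b22) (\<bullet>)"
    using sol soliton_tr by (simp add: soliton_eq)
  moreover have "(b11-b22)^2 + 4*b12*b21 < 0"
  proof -
    have "(b11-b22)^2 + 4*b12*b21 = -4*\<alpha>^2"
      using nz unfolding b11_def b12_def b21_def b22_def by (simp add: field_simps power2_eq_square)
    then show ?thesis using nz by simp
  qed
  ultimately have bb: "b11 = b22" "b12 = -b21" using soliton_forced by blast+
  have d0: "d = 0" using bb(1) nz unfolding b11_def b22_def by (simp add: field_simps)
  have fc: "f*f = c*c" using bb(2) nz d0 unfolding b12_def b21_def by (simp add: field_simps)
  define G where "G = (\<lambda>x::vec3. vector [x$1, (\<alpha>*x$2 - \<beta>*x$1)/f, (\<alpha>*x$3 - \<gamma>*x$1)/f] :: vec3)"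
  define F where "F = (\<lambda>x::vec3. vector [x$1, (\<beta>*x$1 + f*x$2)/\<alpha>, (\<gamma>*x$1 + f*x$3)/\<alpha>] :: vec3)"
  have FG: "F (G x) = x" for x using nz by (simp add: F_def G_def vec_eq_iff forall_3 field_simps)
  have GF: "G (F x) = x" for x using nz by (simp add: F_def G_def vec_eq_iff forall_3 field_simps)
  define T where "T = (\<lambda>z::vec3. vector [z$1/\<alpha>, (f/c)*z$2/\<alpha>, z$3/\<alpha>] :: vec3)"
  have FQ: "F z = Q (T z)" for z using nz d0
    by (simp add: F_def Q_def T_def Qf_def vec_eq_iff forall_3 field_simps)
  have Fip: "ip (F u) (F v) = (1/\<alpha>^2) * (u \<bullet> v)" for u v
  proof -
    have "ip (F u) (F v) = T u \<bullet> T v" unfolding FQ Q_def using orth by simp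
    also have "\<dots> = (u$1 * v$1 + ((f*f)/(c*c))*u$2 * v$2 + u$3 * v$3)/(\<alpha>*\<alpha>)"
      using nz by (simp add: T_def inner_vec_def sum_3 field_simps)
    also have "\<dots> = (1/\<alpha>^2) * (u \<bullet> v)"
      using nz fc by (simp add: inner_vec_def sum_3 field_simps power2_eq_square)
    finally show ?thesis .
  qed
  have aut: "is_automorphism a G"
    unfolding is_automorphism_def
  proof (intro conjI allI)
    show "linear G" unfolding G_def using nz
      by (intro linearI) (simp_all add: vec_eq_iff forall_3 field_simps)
    show "bij G" by (rule o_bij[of F]) (simp_all add: fun_eq_iff FG GF)
    fix x y
    show "G (brk a x y) = brk a (G x) (G y)"
      using nz unfolding brk_eq by (simp add: G_def brkM_def vec_eq_iff forall_3 field_simps)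
  qed
  have "\<forall>x y. ip x y = (1/\<alpha>^2) * ip0 (G x) (G y)"
    by (metis FG Fip ip0_def)
  moreover have "1/\<alpha>^2 > 0" using nz by simp
  ultimately show ?thesis unfolding iso_up_to_scaling_def using aut by blast
qed

lemma backward:
  assumes ip: "is_inner_product ip" and iso0: "iso_up_to_scaling a ip ip0"
  shows "is_solvsoliton a ip"
proof -
  obtain k g where k: "k > 0" and aut: "is_automorphism a g"
    and eq: "\<forall>x y. ip x y = k * ip0 (g x) (g y)"
    using iso0 unfolding iso_up_to_scaling_def by blast
  have lg: "linear g" and bg: "bij g" and hg: "\<And>x y. g (brk a x y) = brk a (g x) (g y)"
    using aut unfolding is_automorphism_def by blast+
  define r where "r = sqrt k"
  have r: "r > 0" "r * r = k" using k by (simp_all add: r_def)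
  define P where "P = (\<lambda>x. r *\<^sub>R g x)"
  define Q where "Q = (\<lambda>y. inv g ((1/r) *\<^sub>R y))"
  have ig: "inj g" and sg: "surj g" using bg by (simp_all add: bij_is_inj bij_is_surj)
  have linP: "linear P" unfolding P_def using lg by (simp add: linear_compose_scale_right)
  have linI: "linear (inv g)" by (rule inj_linear_imp_inv_linear[OF lg ig])
  have linQ: "linear Q" unfolding Q_def
    using linear_compose[OF linear_compose_scale_right[OF linear_id, of "1/r"] linI]
    by (simp add: o_def id_def)
  have QP: "Q (P x) = x" for x using r by (simp add: Q_def P_def inv_f_f[OF ig])
  have PQ: "P (Q y) = y" for y using r by (simp add: Q_def P_def surj_f_inv_f[OF sg])
  have hom: "P (brk a x y) = brkM (a/r) (1/r) (-(1/r)) (a/r) (P x) (P y)" for x y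
  proof -
    have "P (brk a x y) = r *\<^sub>R brk a (g x) (g y)" unfolding P_def hg ..
    also have "\<dots> = brkM (a/r) (1/r) (-(1/r)) (a/r) (P x) (P y)"
      using r(1) unfolding P_def brk_eq
      by (simp add: brkM_def vec_eq_iff forall_3 field_simps)
    finally show ?thesis .
  qed
  have isoP: "ip x y = P x \<bullet> P y" for x y
    using eq r by (simp add: P_def ip0_def)
  interpret transp "brk a" ip P Q "a/r" "1/r" "-(1/r)" "a/r"
    by (rule transp.intro[OF ip linP linQ]) (fact QP PQ hom isoP)+
  show ?thesis unfolding soliton_eq soliton_tr by (rule soliton_normal)
qed

lemma einstein0: "is_einstein a ip0"
proof -
  have "ip0 = (\<bullet>)" by (intro ext) (simp add: ip0_def)
  then show ?thesis
    unfolding is_einstein_def ricci_eq brk_eq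
    using ricci_normal[of a 1] by (auto intro!: exI[of _ "-2*a^2"])
qed

theorem proposition4p11:
  fixes a :: real
  assumes "a \<ge> 0"
  shows "(\<forall>ip. is_inner_product ip \<longrightarrow>
            (is_solvsoliton a ip \<longleftrightarrow> iso_up_to_scaling a ip ip0))
         \<and> is_einstein a ip0"
  using forward backward einstein0 by blast

end
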